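(* Let $H=\langle a,b\mid a^2=ba^2b\rangle$. Then $H$ is reduced and atomic with $\mathcal A(H)=\{a,b\}$, and $\rho_k(H)=\infty$ for all $k\ge 2$.
   Context: $H$ is the monoid presented by generators $a,b$ and the single relation $a^2=ba^2b$. $\mathcal A(H)$ is its set of atoms (irreducible non-units). For $c\in H$, $\mathsf L(c)$ is the set of all $k$ such that $c$ is a product of $k$ atoms; $\mathcal U_k(H)$ is the union of all $\mathsf L(c)$ containing $k$, and $\rho_k(H)=\sup\mathcal U_k(H)$. *)

theory Defs
  imports Main "HOL-Library.Extended_Nat"
begin

definition mon_unit :: "'a::monoid_mult \<Rightarrow> bool" where
  "mon_unit x \<longleftrightarrow> (\<exists>y. x * y = 1 \<and> y * x = 1)"

definition atoms :: "'a::monoid_mult set" where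
  "atoms = {x. \<not> mon_unit x \<and> (\<forall>y z. x = y * z \<longrightarrow> mon_unit y \<or> mon_unit z)}"

definition reduced :: "'a::monoid_mult itself \<Rightarrow> bool" where
  "reduced _ \<longleftrightarrow> (\<forall>u::'a. mon_unit u \<longrightarrow> u = 1)"

definition atomic :: "'a::monoid_mult itself \<Rightarrow> bool" where
  "atomic _ \<longleftrightarrow> (\<forall>x::'a. \<not> mon_unit x \<longrightarrow>
      (\<exists>xs. set xs \<subseteq> atoms \<and> prod_list xs = x))"

definition lengths :: "'a::monoid_mult \<Rightarrow> nat set" where
  "lengths c = {k. \<exists>xs. length xs = k \<and> set xs \<subseteq> atoms \<and> prod_list xs = c}"

definition unions_of_lengths :: "'a::monoid_mult itself \<Rightarrow> nat \<Rightarrow> nat set" where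
  "unions_of_lengths _ k = \<Union> {lengths (c::'a) | c. k \<in> lengths c}"

definition rho :: "'a::monoid_mult itself \<Rightarrow> nat \<Rightarrow> enat" where
  "rho T k = Sup (enat ` unions_of_lengths T k)"

datatype gen = GA | GB

inductive eqv :: "gen list \<Rightarrow> gen list \<Rightarrow> bool" where
  rel: "eqv (u @ [GA, GA] @ v) (u @ [GB, GA, GA, GB] @ v)"
| refl: "eqv w w"
| sym: "eqv w w' \<Longrightarrow> eqv w' w"
| trans: "eqv w w' \<Longrightarrow> eqv w' w'' \<Longrightarrow> eqv w w''"

lemma eqv_equivp: "equivp eqv"
  by (rule equivpI) (auto simp: reflp_def symp_def transp_def intro: eqv.intros)

lemma eqv_app_right: "eqv x y \<Longrightarrow> eqv (x @ w) (y @ w)"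
proof (induction rule: eqv.induct)
  case (rel u v) then show ?case using eqv.rel[of u "v @ w"] by simp
qed (auto intro: eqv.intros)

lemma eqv_app_left: "eqv x y \<Longrightarrow> eqv (w @ x) (w @ y)"
proof (induction rule: eqv.induct)
  case (rel u v) then show ?case using eqv.rel[of "w @ u" v] by simp
qed (auto intro: eqv.intros)

quotient_type H = "gen list" / eqv
  by (rule eqv_equivp)

instantiation H :: monoid_mult
begin

lift_definition one_H :: H is "[]" .

lift_definition times_H :: "H \<Rightarrow> H \<Rightarrow> H" is "(@)"
  by (meson eqv.trans eqv_app_left eqv_app_right)

instance
  by standard (transfer; simp add: eqv.refl)+

end

lift_definition gen_a :: H is "[GA]" .
lift_definition gen_b :: H is "[GB]" .

end

theory Submission
  imports Defs
begin

definition cnt :: "gen list \<Rightarrow> nat" where "cnt w = length (filter ((=) GA) w)"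

lemma eqv_inv: "eqv w w' \<Longrightarrow> cnt w = cnt w' \<and> (cnt w \<le> 1 \<longrightarrow> w = w')"
proof (induction rule: eqv.induct)
  case (rel u v)
  have "cnt (u @ [GA, GA] @ v) = cnt (u @ [GB, GA, GA, GB] @ v)" by (simp add: cnt_def)
  moreover have "\<not> cnt (u @ [GA, GA] @ v) \<le> 1" by (simp add: cnt_def)
  ultimately show ?case by blast
next
  case (refl w) then show ?case by simp
next
  case (sym w w') then show ?case by metis
next
  case (trans w w' w'') then show ?case by metis
qed

fun gw :: "gen \<Rightarrow> H" where "gw GA = gen_a" | "gw GB = gen_b"

lemma gw_abs: "gw g = abs_H [g]"
  by (cases g) (auto simp: gen_a.abs_eq gen_b.abs_eq)

lemma mult_abs: "abs_H x * abs_H y = abs_H (x @ y)"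
  by (simp add: times_H.abs_eq)

lemma one_abs: "(1::H) = abs_H []"
  by (simp add: one_H.abs_eq)

lemma prod_gw: "prod_list (map gw w) = abs_H w"
proof (induction w)
  case Nil then show ?case by (simp add: one_abs)
next
  case (Cons g w) then show ?case using mult_abs[of "[g]" w] by (simp add: gw_abs)
qed

lemma obtain_rep: obtains xs where "x = abs_H xs"
  by (induct x rule: H.abs_induct) auto

lemma abs_one_iff: "abs_H xs = 1 \<longleftrightarrow> xs = []"
proof
  assume "abs_H xs = 1"
  then have "eqv xs []" by (simp add: one_abs H.abs_eq_iff)
  then show "xs = []" using eqv_inv[of xs "[]"] by (auto simp: cnt_def)
qed (simp add: one_abs)

lemma unit_iff: "mon_unit (x::H) \<longleftrightarrow> x = 1"
proof
  assume "mon_unit x"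
  then obtain y where "x * y = 1" by (auto simp: mon_unit_def)
  moreover obtain xs where x: "x = abs_H xs" by (rule obtain_rep)
  moreover obtain ys where "y = abs_H ys" by (rule obtain_rep)
  ultimately have "xs @ ys = []" by (simp add: mult_abs abs_one_iff)
  then show "x = 1" using x by (simp add: one_abs)
qed (auto simp: mon_unit_def)

lemma gen_atom: "gw g \<in> atoms"
proof -
  have nu: "\<not> mon_unit (gw g)" by (simp add: unit_iff gw_abs abs_one_iff)
  have "mon_unit y \<or> mon_unit z" if "gw g = y * z" for y z
  proof -
    obtain ys where y: "y = abs_H ys" by (rule obtain_rep)
    obtain zs where z: "z = abs_H zs" by (rule obtain_rep)
    have "eqv [g] (ys @ zs)" using that y z by (simp add: gw_abs mult_abs H.abs_eq_iff)
    moreover have "cnt [g] \<le> 1" by (cases g) (auto simp: cnt_def)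
    ultimately have "ys @ zs = [g]" using eqv_inv by metis
    then have "ys = [] \<or> zs = []" by (cases ys) auto
    then show ?thesis using y z by (auto simp: unit_iff abs_one_iff)
  qed
  then show ?thesis using nu by (auto simp: atoms_def)
qed

lemma atoms_eq: "(atoms :: H set) = {gen_a, gen_b}"
proof
  show "{gen_a, gen_b} \<subseteq> (atoms :: H set)" using gen_atom[of GA] gen_atom[of GB] by auto
  show "(atoms :: H set) \<subseteq> {gen_a, gen_b}"
  proof
    fix x :: H assume xa: "x \<in> atoms"
    obtain xs where x: "x = abs_H xs" by (rule obtain_rep)
    have "xs \<noteq> []" using xa x by (auto simp: atoms_def unit_iff one_abs)
    then obtain g rest where xs: "xs = g # rest" by (cases xs) auto
    have "x = gw g * abs_H rest" using x xs mult_abs[of "[g]" rest] by (simp add: gw_abs)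
    with xa have "mon_unit (gw g) \<or> mon_unit (abs_H rest)" by (auto simp: atoms_def)
    moreover have "\<not> mon_unit (gw g)" by (simp add: unit_iff gw_abs abs_one_iff)
    ultimately have "abs_H rest = 1" by (simp add: unit_iff)
    then have "x = gw g" using \<open>x = gw g * abs_H rest\<close> by simp
    then show "x \<in> {gen_a, gen_b}" by (cases g) auto
  qed
qed

lemma word_len: "length w \<in> lengths (abs_H w)"
proof -
  have "set (map gw w) \<subseteq> atoms" using gen_atom by auto
  then show ?thesis unfolding lengths_def using prod_gw[of w] by (intro CollectI exI[of _ "map gw w"]) auto
qed

lemma rep_cons: "replicate n x @ x # xs = x # replicate n x @ xs"
  by (induction n) auto

lemma pump: "eqv (replicate n GB @ [GA,GA] @ replicate n GB) [GA,GA]"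
proof (induction n)
  case 0 then show ?case by (simp add: eqv.refl)
next
  case (Suc n)
  have e: "replicate (Suc n) GB @ [GA,GA] @ replicate (Suc n) GB
        = replicate n GB @ [GB,GA,GA,GB] @ replicate n GB"
    using rep_cons[of n GB "[GA,GA,GB] @ replicate n GB"] by simp
  show ?case unfolding e
    by (rule eqv.trans[OF eqv.sym[OF eqv.rel] Suc])
qed

lemma enat_top: "(\<And>n. enat n \<le> x) \<Longrightarrow> x = \<infinity>"
proof (cases x)
  case (enat m)
  assume h: "\<And>n. enat n \<le> x"
  from h[of "Suc m"] enat show ?thesis by simp
qed simp

theorem mainTheorem6:
  shows "reduced TYPE(H) \<and> atomic TYPE(H) \<and> (atoms :: H set) = {gen_a, gen_b} \<and>
         (\<forall>k\<ge>2. rho TYPE(H) k = \<infinity>)"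
proof (intro conjI allI impI)
  show "reduced TYPE(H)" by (simp add: reduced_def unit_iff)
  show "atomic TYPE(H)" unfolding atomic_def
  proof (intro allI impI)
    fix x :: H
    obtain xs where x: "x = abs_H xs" by (rule obtain_rep)
    show "\<exists>xs. set xs \<subseteq> atoms \<and> prod_list xs = x"
      using gen_atom x prod_gw[of xs] by (intro exI[of _ "map gw xs"]) auto
  qed
  show "(atoms :: H set) = {gen_a, gen_b}" by (rule atoms_eq)
  fix k :: nat assume k: "2 \<le> k"
  define c where "c = abs_H ([GA,GA] @ replicate (k-2) GB)"
  have kk: "Suc (Suc (k - 2)) = k" using k by simp
  have kc: "k \<in> lengths c" using word_len[of "[GA,GA] @ replicate (k-2) GB"]
    by (simp add: c_def kk)
  have sub: "lengths c \<subseteq> unions_of_lengths TYPE(H) k"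
    using kc unfolding unions_of_lengths_def by blast
  have "enat m \<le> rho TYPE(H) k" for m
  proof -
    define w where "w = replicate m GB @ [GA,GA] @ replicate m GB @ replicate (k-2) GB"
    have "eqv w ([GA,GA] @ replicate (k-2) GB)"
      using eqv_app_right[OF pump[of m], of "replicate (k-2) GB"] by (simp add: w_def)
    then have "abs_H w = c" by (simp add: c_def H.abs_eq_iff)
    then have "length w \<in> unions_of_lengths TYPE(H) k" using word_len[of w] sub by auto
    then have "enat (length w) \<le> rho TYPE(H) k" unfolding rho_def by (simp add: Sup_upper)
    moreover have "m \<le> length w" by (simp add: w_def)
    ultimately show ?thesis by (meson enat_ord_simps(1) order_trans)
  qed
  then show "rho TYPE(H) k = \<infinity>" by (rule enat_top)
qed

end
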